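(* Let $\mathbf{I}$ be a $d$-system of ideals in a ring $R$ and $A:=\mathscr{A}(R,\mathbf{I})$. For each $1\le k\le d$ there is a short exact sequence of left $A$-modules $$0\to Ae_{k+1}\xrightarrow{\psi}Ae_k\to\Delta_k\to0$$ (with the convention $Ae_{d+1}:=0$), where $\psi$ restricts, for every $1\le i\le d$, to the canonical inclusion $e_iAe_{k+1}=I_{i,k+1}/I_{i,d+1}\hookrightarrow I_{ik}/I_{i,d+1}=e_iAe_k$.
   Context: A $d$-system of ideals in $R$ is a collection $\{I_{ij}\mid1\le i,j\le d+1\}$ of two-sided ideals with $I_{ij}I_{jk}\subset I_{ik}$ and $I_{ij}=R$ for $i\ge j$. $\mathscr{A}(R,\mathbf{I}):=\bigoplus_{1\le i,j\le d}I_{ij}/I_{i,d+1}$ (so $e_iAe_j=I_{ij}/I_{i,d+1}$) with multiplication $(x+I_{i,d+1})(y+I_{k,d+1})=\delta_{jk}(xy+I_{i,d+1})\in I_{il}/I_{i,d+1}$ for $x\in I_{ij},y\in I_{kl}$. Put $e_k:=1+I_{k,d+1}\in I_{kk}/I_{k,d+1}$, $f_j:=\sum_{k>j}e_k$ ($f_d=0$), $J_j:=Af_jA$, and $\Delta_k:=(A/J_k)e_k=Ae_k/Af_kAe_k$ for $1\le k\le d$. *)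

theory Defs
  imports Main
begin

definition two_sided_ideal :: "'a::ring_1 set \<Rightarrow> bool" where
  "two_sided_ideal S \<longleftrightarrow> 0 \<in> S \<and> (\<forall>x\<in>S. \<forall>y\<in>S. x + y \<in> S) \<and> (\<forall>x\<in>S. - x \<in> S)
     \<and> (\<forall>x\<in>S. \<forall>r. r * x \<in> S \<and> x * r \<in> S)"

text \<open>A d-system of ideals, indices 1..d+1. The inclusion of the ideal product
  I_ij I_jk in I_ik is written elementwise (equivalent since I_ik is an ideal).\<close>
definition d_system :: "nat \<Rightarrow> (nat \<Rightarrow> nat \<Rightarrow> 'a::ring_1 set) \<Rightarrow> bool" where
  "d_system d I \<longleftrightarrow>
     (\<forall>i\<in>{1..Suc d}. \<forall>j\<in>{1..Suc d}. two_sided_ideal (I i j)) \<and>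
     (\<forall>i\<in>{1..Suc d}. \<forall>j\<in>{1..Suc d}. j \<le> i \<longrightarrow> I i j = UNIV) \<and>
     (\<forall>i\<in>{1..Suc d}. \<forall>j\<in>{1..Suc d}. \<forall>k\<in>{1..Suc d}.
        \<forall>x\<in>I i j. \<forall>y\<in>I j k. x * y \<in> I i k)"

definition coset :: "'a::ring_1 \<Rightarrow> 'a set \<Rightarrow> 'a set" where
  "coset a S = (\<lambda>t. a + t) ` S"

text \<open>Elements of A(R,I): families X i j (1 \<le> i,j \<le> d), X i j a coset
  a + I_{i,d+1} with a in I_ij; entries outside the index range are {0}.\<close>
type_synonym 'a elt = "nat \<Rightarrow> nat \<Rightarrow> 'a set"

definition Acarrier :: "nat \<Rightarrow> (nat \<Rightarrow> nat \<Rightarrow> 'a::ring_1 set) \<Rightarrow> 'a elt set" where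
  "Acarrier d I = {X. (\<forall>i j. i \<in> {1..d} \<and> j \<in> {1..d} \<longrightarrow>
                        (\<exists>a\<in>I i j. X i j = coset a (I i (Suc d)))) \<and>
                      (\<forall>i j. \<not> (i \<in> {1..d} \<and> j \<in> {1..d}) \<longrightarrow> X i j = {0})}"

definition Azero :: "nat \<Rightarrow> (nat \<Rightarrow> nat \<Rightarrow> 'a::ring_1 set) \<Rightarrow> 'a elt" where
  "Azero d I = (\<lambda>i j. if i \<in> {1..d} \<and> j \<in> {1..d} then I i (Suc d) else {0})"

definition Aadd :: "'a::ring_1 elt \<Rightarrow> 'a elt \<Rightarrow> 'a elt" where
  "Aadd X Y = (\<lambda>i j. {x + y | x y. x \<in> X i j \<and> y \<in> Y i j})"

definition Amult :: "nat \<Rightarrow> (nat \<Rightarrow> nat \<Rightarrow> 'a::ring_1 set) \<Rightarrow> 'a elt \<Rightarrow> 'a elt \<Rightarrow> 'a elt" where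
  "Amult d I X Y = (\<lambda>i l. if i \<in> {1..d} \<and> l \<in> {1..d} then
      {(\<Sum>j\<in>{1..d}. f j * g j) + t | f g t.
          (\<forall>j\<in>{1..d}. f j \<in> X i j \<and> g j \<in> Y j l) \<and> t \<in> I i (Suc d)}
    else {0})"

text \<open>Single-entry element: coset a + I_{i,d+1} in position (i,j), zero elsewhere
  (this is the zero element if (i,j) is out of range).\<close>
definition Aentry :: "nat \<Rightarrow> (nat \<Rightarrow> nat \<Rightarrow> 'a::ring_1 set) \<Rightarrow> nat \<Rightarrow> nat \<Rightarrow> 'a \<Rightarrow> 'a elt" where
  "Aentry d I i j a = (\<lambda>i' j'. if i' \<in> {1..d} \<and> j' \<in> {1..d} then
      (if i' = i \<and> j' = j then coset a (I i' (Suc d)) else I i' (Suc d)) else {0})"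

text \<open>Idempotent e_k = 1 + I_{k,d+1} in position (k,k); for k = d+1 this is 0,
  giving the convention A e_{d+1} = 0.\<close>
definition Aidem :: "nat \<Rightarrow> (nat \<Rightarrow> nat \<Rightarrow> 'a::ring_1 set) \<Rightarrow> nat \<Rightarrow> 'a elt" where
  "Aidem d I k = Aentry d I k k 1"

definition Asum_list :: "nat \<Rightarrow> (nat \<Rightarrow> nat \<Rightarrow> 'a::ring_1 set) \<Rightarrow> 'a elt list \<Rightarrow> 'a elt" where
  "Asum_list d I xs = foldr Aadd xs (Azero d I)"

definition Af :: "nat \<Rightarrow> (nat \<Rightarrow> nat \<Rightarrow> 'a::ring_1 set) \<Rightarrow> nat \<Rightarrow> 'a elt" where
  "Af d I j = Asum_list d I (map (Aidem d I) [Suc j..<Suc d])"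

definition Aleft :: "nat \<Rightarrow> (nat \<Rightarrow> nat \<Rightarrow> 'a::ring_1 set) \<Rightarrow> 'a elt \<Rightarrow> 'a elt set" where
  "Aleft d I x = {Amult d I a x | a. a \<in> Acarrier d I}"

definition Atwo :: "nat \<Rightarrow> (nat \<Rightarrow> nat \<Rightarrow> 'a::ring_1 set) \<Rightarrow> 'a elt \<Rightarrow> 'a elt set" where
  "Atwo d I x = {Asum_list d I (map (\<lambda>(a, b). Amult d I (Amult d I a x) b) ps) | ps.
                   set ps \<subseteq> Acarrier d I \<times> Acarrier d I}"

text \<open>A f_k A e_k = J_k e_k.\<close>
definition JkEk :: "nat \<Rightarrow> (nat \<Rightarrow> nat \<Rightarrow> 'a::ring_1 set) \<Rightarrow> nat \<Rightarrow> 'a elt set" where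
  "JkEk d I k = {Amult d I y (Aidem d I k) | y. y \<in> Atwo d I (Af d I k)}"

text \<open>Canonical projection A e_k \<rightarrow> Delta_k = A e_k / A f_k A e_k (cosets), and Delta_k.\<close>
definition Delta_proj :: "nat \<Rightarrow> (nat \<Rightarrow> nat \<Rightarrow> 'a::ring_1 set) \<Rightarrow> nat \<Rightarrow> 'a elt \<Rightarrow> 'a elt set" where
  "Delta_proj d I k x = {Aadd x y | y. y \<in> JkEk d I k}"

definition Delta :: "nat \<Rightarrow> (nat \<Rightarrow> nat \<Rightarrow> 'a::ring_1 set) \<Rightarrow> nat \<Rightarrow> 'a elt set set" where
  "Delta d I k = Delta_proj d I k ` Aleft d I (Aidem d I k)"

end

theory Submission
  imports Defs
begin

definition mk :: "nat \<Rightarrow> (nat \<Rightarrow> nat \<Rightarrow> 'a::ring_1 set) \<Rightarrow> (nat \<Rightarrow> nat \<Rightarrow> 'a) \<Rightarrow> 'a elt" where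
  "mk d I x = (\<lambda>i j. if i \<in> {1..d} \<and> j \<in> {1..d} then coset (x i j) (I i (Suc d)) else {0})"

definition good :: "nat \<Rightarrow> (nat \<Rightarrow> nat \<Rightarrow> 'a::ring_1 set) \<Rightarrow> (nat \<Rightarrow> nat \<Rightarrow> 'a) \<Rightarrow> bool" where
  "good d I x \<longleftrightarrow> (\<forall>i\<in>{1..d}. \<forall>j\<in>{1..d}. x i j \<in> I i j)"

definition mmul :: "nat \<Rightarrow> (nat \<Rightarrow> nat \<Rightarrow> 'a::ring_1) \<Rightarrow> (nat \<Rightarrow> nat \<Rightarrow> 'a) \<Rightarrow> nat \<Rightarrow> nat \<Rightarrow> 'a" where
  "mmul d x y = (\<lambda>i l. \<Sum>j\<in>{1..d}. x i j * y j l)"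

definition col :: "nat \<Rightarrow> (nat \<Rightarrow> 'a::zero) \<Rightarrow> nat \<Rightarrow> nat \<Rightarrow> 'a" where
  "col m v = (\<lambda>i j. if j = m then v i else 0)"

definition dlt :: "nat \<Rightarrow> nat \<Rightarrow> nat \<Rightarrow> 'a::{zero,one}" where
  "dlt m = (\<lambda>i j. if i = m \<and> j = m then 1 else 0)"

definition psi :: "nat \<Rightarrow> (nat \<Rightarrow> nat \<Rightarrow> 'a::ring_1 set) \<Rightarrow> nat \<Rightarrow> 'a elt \<Rightarrow> 'a elt" where
  "psi d I k X = (\<lambda>i j. if i \<in> {1..d} \<and> j \<in> {1..d} then
      (if j = k then (if Suc k \<le> d then X i (Suc k) else I i (Suc d)) else I i (Suc d)) else {0})"

definition hasC :: "nat \<Rightarrow> (nat \<Rightarrow> nat \<Rightarrow> 'a::ring_1 set) \<Rightarrow> nat \<Rightarrow> (nat \<Rightarrow> nat \<Rightarrow> 'a) \<Rightarrow> bool" where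
  "hasC d I k x \<longleftrightarrow> (\<forall>i\<in>{1..d}. \<forall>j\<in>{1..d}. x i j \<in> I i (Suc k))"

definition QQ :: "nat \<Rightarrow> (nat \<Rightarrow> nat \<Rightarrow> 'a::ring_1 set) \<Rightarrow> nat \<Rightarrow> 'a elt \<Rightarrow> bool" where
  "QQ d I k X \<longleftrightarrow> (\<exists>x. X = mk d I x \<and> good d I x \<and> hasC d I k x)"

lemma ideal_0: "two_sided_ideal S \<Longrightarrow> 0 \<in> S" by (simp add: two_sided_ideal_def)
lemma ideal_add: "two_sided_ideal S \<Longrightarrow> x \<in> S \<Longrightarrow> y \<in> S \<Longrightarrow> x + y \<in> S"
  by (simp add: two_sided_ideal_def)
lemma ideal_neg: "two_sided_ideal S \<Longrightarrow> x \<in> S \<Longrightarrow> - x \<in> S" by (simp add: two_sided_ideal_def)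
lemma ideal_diff: "two_sided_ideal S \<Longrightarrow> x \<in> S \<Longrightarrow> y \<in> S \<Longrightarrow> x - y \<in> S"
  using ideal_add[of S x "-y"] ideal_neg[of S y] by simp
lemma ideal_lmul: "two_sided_ideal S \<Longrightarrow> x \<in> S \<Longrightarrow> r * x \<in> S" by (simp add: two_sided_ideal_def)
lemma ideal_rmul: "two_sided_ideal S \<Longrightarrow> x \<in> S \<Longrightarrow> x * r \<in> S" by (simp add: two_sided_ideal_def)
lemma ideal_sum: assumes "two_sided_ideal S" "finite A" "\<forall>j\<in>A. f j \<in> S" shows "sum f A \<in> S"
  using assms(2,3) by (induction A rule: finite_induct) (auto intro: ideal_add[OF assms(1)] ideal_0[OF assms(1)])

lemma coset_mem: "y \<in> coset a S \<longleftrightarrow> y - a \<in> S"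
proof
  assume "y \<in> coset a S" then obtain t where "t \<in> S" "y = a + t" by (auto simp: coset_def)
  then show "y - a \<in> S" by simp
next
  assume "y - a \<in> S" moreover have "y = a + (y - a)" by simp
  ultimately show "y \<in> coset a S" unfolding coset_def by blast
qed

lemma coset_eq: assumes S: "two_sided_ideal S" shows "coset a S = coset b S \<longleftrightarrow> a - b \<in> S"
proof
  assume "coset a S = coset b S"
  moreover have "a \<in> coset a S" using ideal_0[OF S] by (simp add: coset_mem)
  ultimately show "a - b \<in> S" by (simp add: coset_mem)
next
  assume h: "a - b \<in> S"
  show "coset a S = coset b S"
  proof (rule set_eqI)
    fix y
    have "y - b = (y - a) + (a - b)" "y - a = (y - b) - (a - b)" by simp_all
    then show "y \<in> coset a S \<longleftrightarrow> y \<in> coset b S" unfolding coset_mem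
      using h ideal_add[OF S] ideal_diff[OF S] by metis
  qed
qed

lemma coset_zero: "coset 0 S = S" by (simp add: coset_def)

lemma coset_add: assumes S: "two_sided_ideal S"
  shows "{p + q |p q. p \<in> coset a S \<and> q \<in> coset b S} = coset (a + b) S"
proof (intro set_eqI iffI)
  fix z assume "z \<in> {p + q |p q. p \<in> coset a S \<and> q \<in> coset b S}"
  then obtain p q where z: "z = p + q" and pq: "p - a \<in> S" "q - b \<in> S" by (auto simp: coset_mem)
  have "p + q - (a + b) = (p - a) + (q - b)" by (simp add: algebra_simps)
  then have "z - (a + b) \<in> S" using z pq ideal_add[OF S] by metis
  then show "z \<in> coset (a + b) S" by (simp add: coset_mem)
next
  fix z assume "z \<in> coset (a + b) S"
  then have "z - (a+b) \<in> S" by (simp add: coset_mem)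
  then have h: "z - a - b \<in> S" by (metis diff_diff_eq)
  have "a \<in> coset a S" "z - a \<in> coset b S" using h ideal_0[OF S] by (simp_all add: coset_mem)
  moreover have "z = a + (z - a)" by simp
  ultimately show "z \<in> {p + q |p q. p \<in> coset a S \<and> q \<in> coset b S}" by blast
qed

context
  fixes d :: nat and I :: "nat \<Rightarrow> nat \<Rightarrow> 'a::ring_1 set"
  assumes ds: "d_system d I"
begin

lemma ds_id: "i \<in> {1..Suc d} \<Longrightarrow> j \<in> {1..Suc d} \<Longrightarrow> two_sided_ideal (I i j)"
  using ds by (simp add: d_system_def)
lemma ds_univ: "i \<in> {1..Suc d} \<Longrightarrow> j \<in> {1..Suc d} \<Longrightarrow> j \<le> i \<Longrightarrow> I i j = UNIV"
  using ds by (simp add: d_system_def)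
lemma ds_mul: "i \<in> {1..Suc d} \<Longrightarrow> j \<in> {1..Suc d} \<Longrightarrow> m \<in> {1..Suc d} \<Longrightarrow> x \<in> I i j \<Longrightarrow> y \<in> I j m
   \<Longrightarrow> x * y \<in> I i m"
  using ds unfolding d_system_def by blast
lemma ds_mono: "i \<in> {1..Suc d} \<Longrightarrow> j \<in> {1..Suc d} \<Longrightarrow> m \<in> {1..Suc d} \<Longrightarrow> m \<le> j \<Longrightarrow> x \<in> I i j
   \<Longrightarrow> x \<in> I i m"
  using ds_mul[of i j m x 1] ds_univ[of j m] by auto
lemma idD: "i \<in> {1..d} \<Longrightarrow> two_sided_ideal (I i (Suc d))" by (rule ds_id) auto

lemma mk_cong: "(\<And>i j. i \<in> {1..d} \<Longrightarrow> j \<in> {1..d} \<Longrightarrow> x i j = y i j) \<Longrightarrow> mk d I x = mk d I y"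
  unfolding mk_def by (intro ext) auto

lemma mk_eq: assumes "\<And>i j. i \<in> {1..d} \<Longrightarrow> j \<in> {1..d} \<Longrightarrow> x i j - y i j \<in> I i (Suc d)"
  shows "mk d I x = mk d I y"
proof (intro ext)
  fix i j show "mk d I x i j = mk d I y i j"
    using assms[of i j] coset_eq[OF idD[of i]] by (simp add: mk_def)
qed

lemma mk_eqD: "mk d I x = mk d I y \<Longrightarrow> i \<in> {1..d} \<Longrightarrow> j \<in> {1..d} \<Longrightarrow> x i j - y i j \<in> I i (Suc d)"
proof -
  assume "mk d I x = mk d I y" "i \<in> {1..d}" "j \<in> {1..d}"
  then have "coset (x i j) (I i (Suc d)) = coset (y i j) (I i (Suc d))"
    unfolding mk_def by metis
  then show ?thesis using coset_eq[OF idD[of i]] \<open>i \<in> {1..d}\<close> by simp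
qed

lemma carrier_mk: "Acarrier d I = {mk d I x | x. good d I x}"
proof (intro set_eqI iffI)
  fix X assume X: "X \<in> Acarrier d I"
  define x where "x i j = (SOME a. a \<in> I i j \<and> X i j = coset a (I i (Suc d)))" for i j
  have P: "x i j \<in> I i j \<and> X i j = coset (x i j) (I i (Suc d))" if "i \<in> {1..d}" "j \<in> {1..d}" for i j
  proof -
    have "\<exists>a\<in>I i j. X i j = coset a (I i (Suc d))" using X that by (simp add: Acarrier_def)
    then show ?thesis unfolding x_def by (metis (mono_tags, lifting) someI_ex)
  qed
  have "X = mk d I x"
  proof (intro ext)
    fix i j show "X i j = mk d I x i j" using P[of i j] X by (auto simp: mk_def Acarrier_def)
  qed
  moreover have "good d I x" using P by (simp add: good_def)
  ultimately show "X \<in> {mk d I x | x. good d I x}" by blast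
next
  fix X assume "X \<in> {mk d I x | x. good d I x}"
  then obtain x where "X = mk d I x" "good d I x" by blast
  then show "X \<in> Acarrier d I" by (auto simp: Acarrier_def mk_def good_def)
qed

lemma Aadd_mk: "Aadd (mk d I x) (mk d I y) = mk d I (\<lambda>i j. x i j + y i j)"
proof (intro ext)
  fix i j show "Aadd (mk d I x) (mk d I y) i j = mk d I (\<lambda>i j. x i j + y i j) i j"
  proof (cases "i \<in> {1..d} \<and> j \<in> {1..d}")
    case True then show ?thesis unfolding Aadd_def mk_def using coset_add[OF idD[of i]] by simp
  next
    case False then show ?thesis unfolding Aadd_def mk_def by auto
  qed
qed

lemma Azero_mk: "Azero d I = mk d I (\<lambda>i j. 0)"
  by (intro ext) (simp add: Azero_def mk_def coset_zero)

lemma Aentry_mk: "Aentry d I i j a = mk d I (\<lambda>i' j'. if i' = i \<and> j' = j then a else 0)"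
  by (intro ext) (simp add: Aentry_def mk_def coset_zero)

lemma Aidem_mk: "Aidem d I m = mk d I (dlt m)"
  unfolding Aidem_def Aentry_mk dlt_def by (rule mk_cong) auto

lemma Amult_mk:
  assumes gx: "good d I x" and gy: "good d I y"
  shows "Amult d I (mk d I x) (mk d I y) = mk d I (mmul d x y)"
proof (intro ext)
  fix i l
  show "Amult d I (mk d I x) (mk d I y) i l = mk d I (mmul d x y) i l"
  proof (cases "i \<in> {1..d} \<and> l \<in> {1..d}")
    case False then show ?thesis unfolding Amult_def mk_def by auto
  next
    case True
    then have i: "i \<in> {1..d}" and l: "l \<in> {1..d}" by auto
    let ?S = "I i (Suc d)"
    have S: "two_sided_ideal ?S" using i by (rule idD)
    have "{(\<Sum>j\<in>{1..d}. f j * g j) + t | f g t.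
          (\<forall>j\<in>{1..d}. f j \<in> mk d I x i j \<and> g j \<in> mk d I y j l) \<and> t \<in> ?S}
         = coset (mmul d x y i l) ?S"
    proof (intro set_eqI iffI)
      fix z assume "z \<in> {(\<Sum>j\<in>{1..d}. f j * g j) + t | f g t.
          (\<forall>j\<in>{1..d}. f j \<in> mk d I x i j \<and> g j \<in> mk d I y j l) \<and> t \<in> ?S}"
      then obtain f g t where z: "z = (\<Sum>j\<in>{1..d}. f j * g j) + t"
        and fg: "\<forall>j\<in>{1..d}. f j \<in> mk d I x i j \<and> g j \<in> mk d I y j l" and t: "t \<in> ?S" by blast
      have "\<forall>j\<in>{1..d}. f j * g j - x i j * y j l \<in> ?S"
      proof
        fix j assume j: "j \<in> {1..d}"
        have fj: "f j - x i j \<in> ?S" using fg j i by (simp add: mk_def coset_mem)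
        have gj: "g j - y j l \<in> I j (Suc d)" using fg j l by (simp add: mk_def coset_mem)
        have "(f j - x i j) * g j \<in> ?S" using fj S ideal_rmul by blast
        moreover have "x i j * (g j - y j l) \<in> ?S"
          using ds_mul[of i j "Suc d" "x i j" "g j - y j l"] gx gj i j by (auto simp: good_def)
        moreover have "f j * g j - x i j * y j l = (f j - x i j) * g j + x i j * (g j - y j l)"
          by (simp add: algebra_simps)
        ultimately show "f j * g j - x i j * y j l \<in> ?S" using ideal_add[OF S] by metis
      qed
      then have "(\<Sum>j\<in>{1..d}. f j * g j - x i j * y j l) \<in> ?S" by (intro ideal_sum[OF S]) auto
      moreover have "z - mmul d x y i l = (\<Sum>j\<in>{1..d}. f j * g j - x i j * y j l) + t"
        by (simp add: z mmul_def sum_subtractf algebra_simps)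
      ultimately show "z \<in> coset (mmul d x y i l) ?S" using t ideal_add[OF S] by (simp add: coset_mem)
    next
      fix z assume "z \<in> coset (mmul d x y i l) ?S"
      then have t: "z - mmul d x y i l \<in> ?S" by (simp add: coset_mem)
      have "\<forall>j\<in>{1..d}. x i j \<in> mk d I x i j \<and> y j l \<in> mk d I y j l"
        using i l ideal_0 idD by (auto simp: mk_def coset_mem)
      moreover have "z = (\<Sum>j\<in>{1..d}. x i j * y j l) + (z - mmul d x y i l)" by (simp add: mmul_def)
      ultimately show "z \<in> {(\<Sum>j\<in>{1..d}. f j * g j) + t | f g t.
          (\<forall>j\<in>{1..d}. f j \<in> mk d I x i j \<and> g j \<in> mk d I y j l) \<and> t \<in> ?S}"
        using t by (intro CollectI exI[where x="\<lambda>j. x i j"] exI[where x="\<lambda>j. y j l"]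
            exI[where x="z - mmul d x y i l"]) simp
    qed
    then show ?thesis using True by (simp add: Amult_def mk_def)
  qed
qed


lemma good_mmul: assumes "good d I x" "good d I y" shows "good d I (mmul d x y)"
  unfolding good_def mmul_def
proof (intro ballI)
  fix i l assume i: "i \<in> {1..d}" and l: "l \<in> {1..d}"
  have "\<forall>j\<in>{1..d}. x i j * y j l \<in> I i l"
  proof
    fix j assume j: "j \<in> {1..d}"
    show "x i j * y j l \<in> I i l" using ds_mul[of i j l "x i j" "y j l"] assms i j l by (auto simp: good_def)
  qed
  then show "(\<Sum>j\<in>{1..d}. x i j * y j l) \<in> I i l" using i l by (intro ideal_sum[OF ds_id]) auto
qed

lemma hasC_mmulL: assumes "good d I x" "hasC d I k y" "k \<le> d" shows "hasC d I k (mmul d x y)"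
  unfolding hasC_def mmul_def
proof (intro ballI)
  fix i l assume i: "i \<in> {1..d}" and l: "l \<in> {1..d}"
  have "\<forall>j\<in>{1..d}. x i j * y j l \<in> I i (Suc k)"
  proof
    fix j assume j: "j \<in> {1..d}"
    show "x i j * y j l \<in> I i (Suc k)"
      using ds_mul[of i j "Suc k" "x i j" "y j l"] assms i j l by (auto simp: good_def hasC_def)
  qed
  then show "(\<Sum>j\<in>{1..d}. x i j * y j l) \<in> I i (Suc k)" using i l assms by (intro ideal_sum[OF ds_id]) auto
qed

lemma hasC_mmulR: assumes "hasC d I k x" "k \<le> d" shows "hasC d I k (mmul d x y)"
  unfolding hasC_def mmul_def
proof (intro ballI)
  fix i l assume i: "i \<in> {1..d}" and l: "l \<in> {1..d}"
  have S: "two_sided_ideal (I i (Suc k))" using i assms by (intro ds_id) auto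
  show "(\<Sum>j\<in>{1..d}. x i j * y j l) \<in> I i (Suc k)"
    using assms i l by (intro ideal_sum[OF S]) (auto simp: hasC_def intro!: ideal_rmul[OF S])
qed

lemma mmul_delta: "l \<in> {1..d} \<Longrightarrow> mmul d x (dlt m) i l = (if l = m then x i m else 0)"
proof (cases "l = m")
  case True
  assume l: "l \<in> {1..d}"
  have "mmul d x (dlt m) i l = (\<Sum>j\<in>{1..d}. if j = m then x i j else 0)"
    unfolding mmul_def using True by (intro sum.cong) (auto simp: dlt_def)
  then show ?thesis using True l by simp
next
  case False then show ?thesis by (simp add: mmul_def dlt_def)
qed

lemma mmul_col: "mmul d x (col m v) = col m (\<lambda>i. \<Sum>j\<in>{1..d}. x i j * v j)"
proof (intro ext)
  fix i l show "mmul d x (col m v) i l = col m (\<lambda>i. \<Sum>j\<in>{1..d}. x i j * v j) i l"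
    by (cases "l = m") (simp_all add: mmul_def col_def)
qed

lemma mmul_colL: assumes "m \<in> {1..d}" shows "mmul d (col m v) y = (\<lambda>i l. v i * y m l)"
proof (intro ext)
  fix i l
  have "mmul d (col m v) y i l = (\<Sum>j\<in>{1..d}. if j = m then v i * y m l else 0)"
    unfolding mmul_def by (intro sum.cong) (auto simp: col_def)
  then show "mmul d (col m v) y i l = v i * y m l" using assms by simp
qed

lemma Aleft_mk: assumes "good d I y"
  shows "Aleft d I (mk d I y) = {mk d I (mmul d x y) | x. good d I x}"
proof (intro set_eqI iffI)
  fix z assume "z \<in> Aleft d I (mk d I y)"
  then obtain x where "z = Amult d I (mk d I x) (mk d I y)" "good d I x"
    unfolding Aleft_def carrier_mk by blast
  then show "z \<in> {mk d I (mmul d x y) | x. good d I x}" using assms Amult_mk by blast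
next
  fix z assume "z \<in> {mk d I (mmul d x y) | x. good d I x}"
  then obtain x where "z = mk d I (mmul d x y)" "good d I x" by blast
  then have "z = Amult d I (mk d I x) (mk d I y)" "mk d I x \<in> Acarrier d I"
    using assms Amult_mk carrier_mk by auto
  then show "z \<in> Aleft d I (mk d I y)" unfolding Aleft_def by blast
qed

lemma good_dlt: "m \<in> {1..Suc d} \<Longrightarrow> good d I (dlt m)"
  unfolding good_def dlt_def
  by (auto intro: ideal_0[OF ds_id] simp: ds_univ)

lemma good_col: assumes "\<forall>i\<in>{1..d}. v i \<in> I i m" "m \<in> {1..Suc d}" shows "good d I (col m v)"
  using assms unfolding good_def col_def by (auto intro: ideal_0[OF ds_id])

lemma Aleft_idem: assumes m: "m \<in> {1..Suc d}"
  shows "Aleft d I (Aidem d I m) = {mk d I (col m v) | v. \<forall>i\<in>{1..d}. v i \<in> I i m}"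
proof -
  have e: "mk d I (mmul d x (dlt m)) = mk d I (col m (\<lambda>i. x i m))" for x
    by (rule mk_cong) (simp add: mmul_delta col_def)
  have A: "Aleft d I (Aidem d I m) = {mk d I (mmul d x (dlt m)) | x. good d I x}"
    unfolding Aidem_mk using Aleft_mk good_dlt[OF m] by blast
  show ?thesis
  proof (intro set_eqI iffI)
    fix z assume "z \<in> Aleft d I (Aidem d I m)"
    then obtain x where gx: "good d I x" and z: "z = mk d I (col m (\<lambda>i. x i m))" using A e by auto
    show "z \<in> {mk d I (col m v) | v. \<forall>i\<in>{1..d}. v i \<in> I i m}"
    proof (cases "m \<le> d")
      case True then have "\<forall>i\<in>{1..d}. x i m \<in> I i m" using gx m by (auto simp: good_def)
      then show ?thesis using z by blast
    next
      case False then have md: "m = Suc d" using m by auto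
      have "z = mk d I (col m (\<lambda>i. 0))" using z md by (auto intro!: mk_cong simp: col_def)
      moreover have "\<forall>i\<in>{1..d}. (0::'a) \<in> I i m" using md by (auto intro: ideal_0[OF ds_id])
      ultimately show ?thesis by blast
    qed
  next
    fix z assume "z \<in> {mk d I (col m v) | v. \<forall>i\<in>{1..d}. v i \<in> I i m}"
    then obtain v where v: "\<forall>i\<in>{1..d}. v i \<in> I i m" and z: "z = mk d I (col m v)" by blast
    show "z \<in> Aleft d I (Aidem d I m)"
    proof (cases "m \<le> d")
      case True
      have "good d I (col m v)" using good_col v m by blast
      moreover have "col m (\<lambda>i. col m v i m) = col m v" by (intro ext) (simp add: col_def)
      then have "z = mk d I (mmul d (col m v) (dlt m))" using e[of "col m v"] z by simp
      ultimately show ?thesis using A by blast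
    next
      case False then have md: "m = Suc d" using m by auto
      have g0: "good d I (\<lambda>i j. 0)" by (auto simp: good_def intro: ideal_0[OF ds_id])
      have "z = mk d I (col m (\<lambda>i. 0))" using z md by (auto intro!: mk_cong simp: col_def)
      then have "z = mk d I (mmul d (\<lambda>i j. 0) (dlt m))" using e[of "\<lambda>i j. 0"] by simp
      then show ?thesis using A g0 by blast
    qed
  qed
qed


lemma psi_const: "\<not> Suc k \<le> d \<Longrightarrow> psi d I k X = mk d I (\<lambda>i j. 0)"
  by (intro ext) (simp add: psi_def mk_def coset_zero)

lemma psi_col: assumes k: "k \<le> d" and v: "\<forall>i\<in>{1..d}. v i \<in> I i (Suc k)"
  shows "psi d I k (mk d I (col (Suc k) v)) = mk d I (col k v)"
proof (cases "Suc k \<le> d")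
  case True
  show ?thesis
  proof (intro ext)
    fix i j show "psi d I k (mk d I (col (Suc k) v)) i j = mk d I (col k v) i j"
      using True by (simp add: psi_def mk_def col_def coset_zero)
  qed
next
  case False
  then have kd: "k = d" using k by auto
  have "mk d I (col k v) = mk d I (\<lambda>i j. 0)"
  proof (rule mk_eq)
    fix i j assume "i \<in> {1..d}" "j \<in> {1..d}"
    then show "col k v i j - 0 \<in> I i (Suc d)" using v kd by (auto simp: col_def intro: ideal_0[OF idD])
  qed
  then show ?thesis using psi_const[OF False] by simp
qed

lemma QQ_zero: "k \<le> d \<Longrightarrow> QQ d I k (Azero d I)"
  unfolding QQ_def Azero_mk good_def hasC_def
  by (intro exI[where x="\<lambda>i j. 0"]) (auto intro: ideal_0[OF ds_id])

lemma QQ_add: assumes "k \<le> d" "QQ d I k X" "QQ d I k Y" shows "QQ d I k (Aadd X Y)"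
proof -
  obtain x y where x: "X = mk d I x" "good d I x" "hasC d I k x"
    and y: "Y = mk d I y" "good d I y" "hasC d I k y" using assms unfolding QQ_def by blast
  have "good d I (\<lambda>i j. x i j + y i j)" using x y
    by (auto simp: good_def intro!: ideal_add[OF ds_id])
  moreover have "hasC d I k (\<lambda>i j. x i j + y i j)" using x y assms(1)
    by (auto simp: hasC_def intro!: ideal_add[OF ds_id])
  ultimately show ?thesis unfolding QQ_def using x y Aadd_mk by blast
qed

lemma QQ_sum: "k \<le> d \<Longrightarrow> \<forall>X\<in>set xs. QQ d I k X \<Longrightarrow> QQ d I k (Asum_list d I xs)"
  by (induction xs) (auto simp: Asum_list_def QQ_zero QQ_add)

lemma Asum_list_mk: "Asum_list d I (map (\<lambda>m. mk d I (G m)) ms) = mk d I (\<lambda>i j. \<Sum>m\<leftarrow>ms. G m i j)"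
proof (induction ms)
  case Nil then show ?case by (simp add: Asum_list_def Azero_mk)
next
  case (Cons a ms)
  then show ?case by (simp add: Asum_list_def Aadd_mk)
qed

definition FF :: "nat \<Rightarrow> nat \<Rightarrow> nat \<Rightarrow> 'b::{zero,one}" where
  "FF k = (\<lambda>i j. if i = j \<and> Suc k \<le> i then 1 else 0)"


lemma Af_mk: "Af d I k = mk d I (FF k)"
proof -
  have "Af d I k = Asum_list d I (map (\<lambda>m. mk d I (dlt m)) [Suc k..<Suc d])"
    unfolding Af_def using Aidem_mk by presburger
  also have "\<dots> = mk d I (\<lambda>i j. \<Sum>m\<leftarrow>[Suc k..<Suc d]. dlt m i j)" by (rule Asum_list_mk)
  also have "\<dots> = mk d I (FF k)"
  proof (rule mk_cong)
    fix i j assume i: "i \<in> {1..d}" and j: "j \<in> {1..d}"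
    have "(\<Sum>m\<leftarrow>[Suc k..<Suc d]. dlt m i j) = (\<Sum>m\<in>{Suc k..<Suc d}. (dlt m i j::'a))"
      by (subst sum_list_distinct_conv_sum_set) (simp_all only: distinct_upt set_upt)
    also have "\<dots> = FF k i j"
    proof (cases "i = j")
      case True
      have "(\<Sum>m\<in>{Suc k..<Suc d}. dlt m i j) = (\<Sum>m\<in>{Suc k..<Suc d}. if m = i then 1 else 0)"
        using True by (intro sum.cong) (auto simp: dlt_def)
      also have "\<dots> = (if i \<in> {Suc k..<Suc d} then 1 else 0)" by (rule sum.delta) simp
      also have "\<dots> = FF k i j" using True i by (simp add: FF_def)
      finally show ?thesis .
    next
      case False
      then have A: "(\<Sum>m\<in>{Suc k..<Suc d}. dlt m i j) = (\<Sum>m\<in>{Suc k..<Suc d}. (0::'a))"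
        by (intro sum.cong) (auto simp: dlt_def)
      have B: "(\<Sum>m\<in>{Suc k..<Suc d}. (0::'a)) = 0" by (rule sum.neutral_const)
      have C: "FF k i j = (0::'a)" using False by (simp add: FF_def)
      have D: "(\<Sum>m\<in>{Suc k..<Suc d}. dlt m i j) = (0::'a)" using A B by (rule trans)
      show ?thesis unfolding C by (rule D)
    qed
    finally show "(\<Sum>m\<leftarrow>[Suc k..<Suc d]. dlt m i j) = (FF k i j::'a)" .
  qed
  finally show ?thesis .
qed

lemma good_FF: "good d I (FF k)"
  unfolding good_def FF_def by (auto intro: ideal_0[OF ds_id] simp: ds_univ)

lemma hasC_FF: "k \<le> d \<Longrightarrow> hasC d I k (FF k)"
  unfolding hasC_def FF_def by (auto intro: ideal_0[OF ds_id] simp: ds_univ)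


definition NN :: "nat \<Rightarrow> 'a elt set" where
  "NN k = {mk d I (col k v) | v. \<forall>i\<in>{1..d}. v i \<in> I i (Suc k)}"

lemma JkEk_sub: assumes k1: "1 \<le> k" and kd: "k \<le> d" shows "JkEk d I k \<subseteq> NN k"
proof
  fix z assume "z \<in> JkEk d I k"
  then obtain y where z: "z = Amult d I y (Aidem d I k)" and y: "y \<in> Atwo d I (Af d I k)"
    unfolding JkEk_def by blast
  obtain ps where yps: "y = Asum_list d I (map (\<lambda>(a, b). Amult d I (Amult d I a (Af d I k)) b) ps)"
    and ps: "set ps \<subseteq> Acarrier d I \<times> Acarrier d I" using y unfolding Atwo_def by blast
  have "\<forall>X\<in>set (map (\<lambda>(a, b). Amult d I (Amult d I a (Af d I k)) b) ps). QQ d I k X"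
  proof
    fix X assume "X \<in> set (map (\<lambda>(a, b). Amult d I (Amult d I a (Af d I k)) b) ps)"
    then obtain a b where ab: "(a, b) \<in> set ps" and X: "X = Amult d I (Amult d I a (Af d I k)) b" by auto
    obtain \<alpha> \<beta> where a: "a = mk d I \<alpha>" "good d I \<alpha>" and b: "b = mk d I \<beta>" "good d I \<beta>"
      using ab ps unfolding carrier_mk by blast
    have "X = mk d I (mmul d (mmul d \<alpha> (FF k)) \<beta>)"
      using X a b by (simp add: Af_mk Amult_mk good_FF good_mmul)
    moreover have "good d I (mmul d (mmul d \<alpha> (FF k)) \<beta>)" using a b good_FF good_mmul by blast
    moreover have "hasC d I k (mmul d (mmul d \<alpha> (FF k)) \<beta>)"
      using a kd hasC_FF hasC_mmulL hasC_mmulR by blast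
    ultimately show "QQ d I k X" unfolding QQ_def by blast
  qed
  then have "QQ d I k y" using QQ_sum kd yps by blast
  then obtain Y where Y: "y = mk d I Y" "good d I Y" "hasC d I k Y" unfolding QQ_def by blast
  have "z = mk d I (mmul d Y (dlt k))" using z Y good_dlt[of k] k1 kd by (simp add: Aidem_mk Amult_mk)
  also have "\<dots> = mk d I (col k (\<lambda>i. Y i k))" by (rule mk_cong) (simp add: mmul_delta col_def)
  finally have "z = mk d I (col k (\<lambda>i. Y i k))" .
  moreover have "\<forall>i\<in>{1..d}. Y i k \<in> I i (Suc k)" using Y k1 kd by (auto simp: hasC_def)
  ultimately show "z \<in> NN k" unfolding NN_def by blast
qed

lemma JkEk_sup: assumes k1: "1 \<le> k" and kd: "k \<le> d" shows "NN k \<subseteq> JkEk d I k"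
proof
  fix z assume "z \<in> NN k"
  then obtain v where z: "z = mk d I (col k v)" and v: "\<forall>i\<in>{1..d}. v i \<in> I i (Suc k)"
    unfolding NN_def by blast
  have vk: "\<forall>i\<in>{1..d}. v i \<in> I i k"
    using v k1 kd by (auto intro: ds_mono[of _ "Suc k" k])
  have gk: "good d I (col k v)" using good_col[OF vk] k1 kd by auto
  have idk: "Amult d I (mk d I (col k v)) (Aidem d I k) = mk d I (col k v)"
  proof -
    have "Amult d I (mk d I (col k v)) (Aidem d I k) = mk d I (mmul d (col k v) (dlt k))"
      using gk good_dlt[of k] k1 kd by (simp add: Aidem_mk Amult_mk)
    also have "\<dots> = mk d I (col k v)" by (rule mk_cong) (simp add: mmul_delta col_def)
    finally show ?thesis .
  qed
  show "z \<in> JkEk d I k"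
  proof (cases "Suc k \<le> d")
    case True
    define E :: "nat \<Rightarrow> nat \<Rightarrow> 'a" where "E = (\<lambda>i j. if i = Suc k \<and> j = k then 1 else 0)"
    have gE: "good d I E" unfolding good_def E_def using True k1
      by (auto intro: ideal_0[OF ds_id] simp: ds_univ)
    have gc: "good d I (col (Suc k) v)" using good_col[OF v] kd by auto
    have sk: "Suc k \<in> {1..d}" using True by auto
    have s1: "mk d I (mmul d (col (Suc k) v) (FF k)) = mk d I (col (Suc k) v)"
      unfolding mmul_colL[OF sk] by (intro mk_cong) (simp add: FF_def col_def)
    have s2: "mk d I (mmul d (col (Suc k) v) E) = mk d I (col k v)"
      unfolding mmul_colL[OF sk] by (intro mk_cong) (simp add: E_def col_def)
    have t: "Amult d I (Amult d I (mk d I (col (Suc k) v)) (Af d I k)) (mk d I E) = mk d I (col k v)"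
      using gc gE good_FF s1 s2 by (simp add: Af_mk Amult_mk)
    let ?ps = "[(mk d I (col (Suc k) v), mk d I E)]"
    have "Asum_list d I (map (\<lambda>(a, b). Amult d I (Amult d I a (Af d I k)) b) ?ps) = mk d I (col k v)"
      using t by (simp add: Asum_list_def Azero_mk Aadd_mk)
    moreover have "set ?ps \<subseteq> Acarrier d I \<times> Acarrier d I" using gc gE carrier_mk by auto
    ultimately have "mk d I (col k v) \<in> Atwo d I (Af d I k)" unfolding Atwo_def by (metis (mono_tags, lifting) mem_Collect_eq)
    moreover have "z = Amult d I (mk d I (col k v)) (Aidem d I k)" using idk z by simp
    ultimately show ?thesis unfolding JkEk_def by blast
  next
    case False
    then have kd': "k = d" using kd by auto
    have "Asum_list d I (map (\<lambda>(a, b). Amult d I (Amult d I a (Af d I k)) b) []) = mk d I (\<lambda>i j. 0)"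
      by (simp add: Asum_list_def Azero_mk)
    then have a0: "mk d I (\<lambda>i j. 0) \<in> Atwo d I (Af d I k)" unfolding Atwo_def
      by (intro CollectI exI[where x="[]"]) simp
    have "mk d I (col k v) = mk d I (\<lambda>i j. 0)"
    proof (rule mk_eq)
      fix i j assume "i \<in> {1..d}" "j \<in> {1..d}"
      then show "col k v i j - 0 \<in> I i (Suc d)" using v kd' by (auto simp: col_def intro: ideal_0[OF idD])
    qed
    then have "z = Amult d I (mk d I (\<lambda>i j. 0)) (Aidem d I k)" using z idk by simp
    then show ?thesis using a0 unfolding JkEk_def by blast
  qed
qed


lemma col_add: "(\<lambda>i j. col m v i j + col m w i j) = col m (\<lambda>i. v i + w i :: 'a)"
  by (intro ext) (simp add: col_def)

lemma Ak1_eq: "k \<le> d \<Longrightarrow> Aleft d I (Aidem d I (Suc k)) = {mk d I (col (Suc k) v) | v. \<forall>i\<in>{1..d}. v i \<in> I i (Suc k)}"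
  by (rule Aleft_idem) auto

lemma psi_img: assumes "k \<le> d" shows "psi d I k ` Aleft d I (Aidem d I (Suc k)) = NN k"
proof (intro set_eqI iffI)
  fix z assume "z \<in> psi d I k ` Aleft d I (Aidem d I (Suc k))"
  then obtain v where "z = psi d I k (mk d I (col (Suc k) v))" "\<forall>i\<in>{1..d}. v i \<in> I i (Suc k)"
    using Ak1_eq[OF assms] by auto
  then show "z \<in> NN k" using psi_col[OF assms] unfolding NN_def by auto
next
  fix z assume "z \<in> NN k"
  then obtain v where "z = mk d I (col k v)" "\<forall>i\<in>{1..d}. v i \<in> I i (Suc k)"
    unfolding NN_def by auto
  then show "z \<in> psi d I k ` Aleft d I (Aidem d I (Suc k))"
    using psi_col[OF assms] Ak1_eq[OF assms] by (auto intro!: image_eqI)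
qed

lemma NN_sub: assumes "1 \<le> k" "k \<le> d" shows "NN k \<subseteq> Aleft d I (Aidem d I k)"
proof
  fix z assume "z \<in> NN k"
  then obtain v where z: "z = mk d I (col k v)" and v: "\<forall>i\<in>{1..d}. v i \<in> I i (Suc k)"
    unfolding NN_def by auto
  have "\<forall>i\<in>{1..d}. v i \<in> I i k" using v assms by (auto intro: ds_mono[of _ "Suc k" k])
  then show "z \<in> Aleft d I (Aidem d I k)" using z Aleft_idem[of k] assms by auto
qed

lemma Dproj: assumes "1 \<le> k" "k \<le> d" shows "Delta_proj d I k x = {Aadd x y | y. y \<in> NN k}"
  unfolding Delta_proj_def using JkEk_sub[OF assms] JkEk_sup[OF assms] by auto

lemma NN_shift: assumes "1 \<le> k" "k \<le> d" "x \<in> NN k" shows "{Aadd x y | y. y \<in> NN k} = NN k"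
proof -
  obtain w where x: "x = mk d I (col k w)" and w: "\<forall>i\<in>{1..d}. w i \<in> I i (Suc k)"
    using assms(3) unfolding NN_def by auto
  have S: "\<And>i. i \<in> {1..d} \<Longrightarrow> two_sided_ideal (I i (Suc k))" using assms by (intro ds_id) auto
  show ?thesis
  proof (intro set_eqI iffI)
    fix z assume "z \<in> {Aadd x y | y. y \<in> NN k}"
    then obtain v where "z = Aadd x (mk d I (col k v))" "\<forall>i\<in>{1..d}. v i \<in> I i (Suc k)"
      unfolding NN_def by auto
    then have "z = mk d I (col k (\<lambda>i. w i + v i))" "\<forall>i\<in>{1..d}. w i + v i \<in> I i (Suc k)"
      using x w by (auto simp: Aadd_mk col_add intro: ideal_add[OF S])
    then show "z \<in> NN k" unfolding NN_def by blast
  next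
    fix z assume "z \<in> NN k"
    then obtain v where z: "z = mk d I (col k v)" and v: "\<forall>i\<in>{1..d}. v i \<in> I i (Suc k)"
      unfolding NN_def by auto
    have "\<forall>i\<in>{1..d}. v i - w i \<in> I i (Suc k)" using v w by (auto intro: ideal_diff[OF S])
    then have "mk d I (col k (\<lambda>i. v i - w i)) \<in> NN k" unfolding NN_def by blast
    moreover have "z = Aadd x (mk d I (col k (\<lambda>i. v i - w i)))" using x z by (simp add: Aadd_mk col_add)
    ultimately show "z \<in> {Aadd x y | y. y \<in> NN k}" by blast
  qed
qed

lemma zero_NN: "k \<le> d \<Longrightarrow> mk d I (col k (\<lambda>i. 0)) \<in> NN k"
  unfolding NN_def by (intro CollectI exI[where x="\<lambda>i. 0"]) (auto intro: ideal_0[OF ds_id])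

lemma Azero_col: "Azero d I = mk d I (col k (\<lambda>i. 0))"
  unfolding Azero_mk by (rule mk_cong) (simp add: col_def)

lemma kernel: assumes "1 \<le> k" "k \<le> d"
  shows "{x \<in> Aleft d I (Aidem d I k). Delta_proj d I k x = Delta_proj d I k (Azero d I)} = NN k"
proof -
  have D0: "Delta_proj d I k (Azero d I) = NN k"
    unfolding Dproj[OF assms] Azero_col[of k] using NN_shift[OF assms zero_NN] assms by simp
  show ?thesis
  proof (intro set_eqI iffI)
    fix x assume "x \<in> {x \<in> Aleft d I (Aidem d I k). Delta_proj d I k x = Delta_proj d I k (Azero d I)}"
    then have x: "x \<in> Aleft d I (Aidem d I k)" and e: "Delta_proj d I k x = NN k" using D0 by auto
    obtain u where u: "x = mk d I (col k u)" using x Aleft_idem[of k] assms by auto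
    have "x = Aadd x (mk d I (col k (\<lambda>i. 0)))" using u by (simp add: Aadd_mk col_add)
    then have "x \<in> Delta_proj d I k x" unfolding Dproj[OF assms] using zero_NN assms by blast
    then show "x \<in> NN k" using e by simp
  next
    fix x assume "x \<in> NN k"
    then show "x \<in> {x \<in> Aleft d I (Aidem d I k). Delta_proj d I k x = Delta_proj d I k (Azero d I)}"
      using NN_sub[OF assms] D0 Dproj[OF assms] NN_shift[OF assms] by auto
  qed
qed


lemma psi_add: assumes "k \<le> d" "x \<in> Aleft d I (Aidem d I (Suc k))" "y \<in> Aleft d I (Aidem d I (Suc k))"
  shows "psi d I k (Aadd x y) = Aadd (psi d I k x) (psi d I k y)"
proof -
  obtain v w where x: "x = mk d I (col (Suc k) v)" and v: "\<forall>i\<in>{1..d}. v i \<in> I i (Suc k)"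
    and y: "y = mk d I (col (Suc k) w)" and w: "\<forall>i\<in>{1..d}. w i \<in> I i (Suc k)"
    using assms Ak1_eq[OF assms(1)] by auto
  have S: "\<And>i. i \<in> {1..d} \<Longrightarrow> two_sided_ideal (I i (Suc k))" using assms by (intro ds_id) auto
  have vw: "\<forall>i\<in>{1..d}. v i + w i \<in> I i (Suc k)" using v w by (auto intro: ideal_add[OF S])
  show ?thesis using x y psi_col[OF assms(1) v] psi_col[OF assms(1) w] psi_col[OF assms(1) vw]
    by (simp add: Aadd_mk col_add)
qed

lemma psi_lin: assumes "1 \<le> k" "k \<le> d" "a \<in> Acarrier d I" "x \<in> Aleft d I (Aidem d I (Suc k))"
  shows "psi d I k (Amult d I a x) = Amult d I a (psi d I k x)"
proof -
  obtain v where x: "x = mk d I (col (Suc k) v)" and v: "\<forall>i\<in>{1..d}. v i \<in> I i (Suc k)"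
    using assms Ak1_eq[OF assms(2)] by auto
  obtain \<alpha> where a: "a = mk d I \<alpha>" "good d I \<alpha>" using assms(3) carrier_mk by auto
  have vk: "\<forall>i\<in>{1..d}. v i \<in> I i k" using v assms by (auto intro: ds_mono[of _ "Suc k" k])
  have g1: "good d I (col (Suc k) v)" using good_col[OF v] assms by auto
  have g2: "good d I (col k v)" using good_col[OF vk] assms by auto
  define w where "w = (\<lambda>i. \<Sum>j\<in>{1..d}. \<alpha> i j * v j)"
  have "\<forall>i\<in>{1..d}. w i \<in> I i (Suc k)"
  proof
    fix i assume i: "i \<in> {1..d}"
    have "\<forall>j\<in>{1..d}. \<alpha> i j * v j \<in> I i (Suc k)"
    proof
      fix j assume j: "j \<in> {1..d}"
      show "\<alpha> i j * v j \<in> I i (Suc k)"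
        using ds_mul[of i j "Suc k" "\<alpha> i j" "v j"] a v i j assms by (auto simp: good_def)
    qed
    then show "w i \<in> I i (Suc k)" unfolding w_def using i assms by (intro ideal_sum[OF ds_id]) auto
  qed
  then have "psi d I k (mk d I (col (Suc k) w)) = mk d I (col k w)" using psi_col assms by blast
  moreover have "Amult d I a x = mk d I (col (Suc k) w)"
    using a x g1 by (simp add: Amult_mk mmul_col w_def)
  moreover have "Amult d I a (psi d I k x) = mk d I (col k w)"
    using a x g2 psi_col[OF assms(2) v] by (simp add: Amult_mk mmul_col w_def)
  ultimately show ?thesis by simp
qed

lemma psi_entry: assumes "k \<le> d" "i \<in> {1..d}" "a \<in> I i (Suc k)"
  shows "psi d I k (Aentry d I i (Suc k) a) = Aentry d I i k a"
proof -
  define v where "v i' = (if i' = i then a else 0)" for i'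
  have v: "\<forall>i'\<in>{1..d}. v i' \<in> I i' (Suc k)" using assms unfolding v_def by (auto intro: ideal_0[OF ds_id])
  have e1: "Aentry d I i (Suc k) a = mk d I (col (Suc k) v)"
    unfolding Aentry_mk by (rule mk_cong) (simp add: col_def v_def)
  have e2: "Aentry d I i k a = mk d I (col k v)"
    unfolding Aentry_mk by (rule mk_cong) (simp add: col_def v_def)
  show ?thesis using e1 e2 psi_col[OF assms(1) v] by simp
qed

lemma psi_inj: assumes "1 \<le> k" "k \<le> d" shows "inj_on (psi d I k) (Aleft d I (Aidem d I (Suc k)))"
proof (rule inj_onI)
  fix x y assume "x \<in> Aleft d I (Aidem d I (Suc k))" "y \<in> Aleft d I (Aidem d I (Suc k))"
    and e: "psi d I k x = psi d I k y"
  then obtain v w where x: "x = mk d I (col (Suc k) v)" and v: "\<forall>i\<in>{1..d}. v i \<in> I i (Suc k)"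
    and y: "y = mk d I (col (Suc k) w)" and w: "\<forall>i\<in>{1..d}. w i \<in> I i (Suc k)"
    using Ak1_eq[OF assms(2)] by auto
  have "mk d I (col k v) = mk d I (col k w)" using e x y psi_col[OF assms(2) v] psi_col[OF assms(2) w] by simp
  then have D: "\<And>i. i \<in> {1..d} \<Longrightarrow> v i - w i \<in> I i (Suc d)"
    using mk_eqD[of "col k v" "col k w" _ k] assms by (simp add: col_def)
  have "mk d I (col (Suc k) v) = mk d I (col (Suc k) w)"
  proof (rule mk_eq)
    fix i j assume "i \<in> {1..d}" "j \<in> {1..d}"
    then show "col (Suc k) v i j - col (Suc k) w i j \<in> I i (Suc d)"
      using D by (auto simp: col_def intro: ideal_0[OF idD])
  qed
  then show "x = y" using x y by simp
qed

end

theorem lemma3p9: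
  fixes d k :: nat and I :: "nat \<Rightarrow> nat \<Rightarrow> 'a::ring_1 set"
  assumes "d_system d I" and "1 \<le> k" and "k \<le> d"
  shows "\<exists>\<psi>. \<psi> ` Aleft d I (Aidem d I (Suc k)) \<subseteq> Aleft d I (Aidem d I k)
      \<and> (\<forall>x\<in>Aleft d I (Aidem d I (Suc k)). \<forall>y\<in>Aleft d I (Aidem d I (Suc k)).
            \<psi> (Aadd x y) = Aadd (\<psi> x) (\<psi> y))
      \<and> (\<forall>a\<in>Acarrier d I. \<forall>x\<in>Aleft d I (Aidem d I (Suc k)).
            \<psi> (Amult d I a x) = Amult d I a (\<psi> x))
      \<and> (\<forall>i\<in>{1..d}. \<forall>a\<in>I i (Suc k). \<psi> (Aentry d I i (Suc k) a) = Aentry d I i k a)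
      \<and> inj_on \<psi> (Aleft d I (Aidem d I (Suc k)))
      \<and> Delta_proj d I k ` Aleft d I (Aidem d I k) = Delta d I k
      \<and> {x \<in> Aleft d I (Aidem d I k). Delta_proj d I k x = Delta_proj d I k (Azero d I)}
          = \<psi> ` Aleft d I (Aidem d I (Suc k))"
proof (intro exI[where x="psi d I k"] conjI)
  note ds = assms(1)
  show "psi d I k ` Aleft d I (Aidem d I (Suc k)) \<subseteq> Aleft d I (Aidem d I k)"
    using psi_img[OF ds assms(3)] NN_sub[OF ds assms(2,3)] by simp
  show "\<forall>x\<in>Aleft d I (Aidem d I (Suc k)). \<forall>y\<in>Aleft d I (Aidem d I (Suc k)).
            psi d I k (Aadd x y) = Aadd (psi d I k x) (psi d I k y)"
    using psi_add[OF ds assms(3)] by blast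
  show "\<forall>a\<in>Acarrier d I. \<forall>x\<in>Aleft d I (Aidem d I (Suc k)).
            psi d I k (Amult d I a x) = Amult d I a (psi d I k x)"
    using psi_lin[OF ds assms(2,3)] by blast
  show "\<forall>i\<in>{1..d}. \<forall>a\<in>I i (Suc k). psi d I k (Aentry d I i (Suc k) a) = Aentry d I i k a"
    using psi_entry[OF ds assms(3)] by blast
  show "inj_on (psi d I k) (Aleft d I (Aidem d I (Suc k)))" using psi_inj[OF ds assms(2,3)] .
  show "Delta_proj d I k ` Aleft d I (Aidem d I k) = Delta d I k" by (simp add: Delta_def)
  show "{x \<in> Aleft d I (Aidem d I k). Delta_proj d I k x = Delta_proj d I k (Azero d I)}
          = psi d I k ` Aleft d I (Aidem d I (Suc k))"
    using kernel[OF ds assms(2,3)] psi_img[OF ds assms(3)] by simp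
qed

end
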